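(* (a) If $\xi_1(\beta)\le C<\frac{\beta u_0}{r}$, then the function $$f_C(z)=\frac{\beta u_0}{r}-\frac{\frac{\beta u_0}{r}-C}{e^{\alpha_1d}+\frac{\alpha_1}{\alpha_2}e^{-\alpha_2d}}\Big(e^{\alpha_1z}+\frac{\alpha_1}{\alpha_2}e^{-\alpha_2z}\Big),\quad z\in[0,d],$$ solves Problem 1 with $f_C'(0)=0$ and $f_C(d)=C$. (b) If $\frac{\beta u_0-1}{r}<C\le\xi_2(\beta)$, then the function $$g_C(z)=\frac{\beta u_0-1}{r}+\Big(C-\frac{\beta u_0-1}{r}\Big)e^{-\alpha_2(z-d)},\quad z\in[d,\infty),$$ solves Problem 2 with $g_C(d)=C$ and $g_C$ bounded.
   Context: Fix $\mu\in\mathbb R$, $\sigma>0$, $u_0>0$, $r>0$, $\beta>0$, $d>0$. For $u\in[0,u_0]$ let $\theta_1(u)=\frac{\sqrt{(\mu-u)^2+2r\sigma^2}+(\mu-u)}{\sigma^2}$, $\theta_2(u)=\frac{\sqrt{(\mu-u)^2+2r\sigma^2}-(\mu-u)}{\sigma^2}$; $\alpha_1=\theta_1(u_0)$, $\alpha_2=\theta_2(u_0)$. Let $\xi_1(\beta)=\frac{\beta u_0}{r}-\beta\frac{e^{\alpha_1d}+\frac{\alpha_1}{\alpha_2}e^{-\alpha_2d}}{\alpha_1(e^{\alpha_1d}-e^{-\alpha_2d})}$ and $\xi_2(\beta)=\frac{\beta u_0-1}{r}+\frac{\beta}{\alpha_2}$. Problem 1: a bounded twice continuously differentiable function $f$ on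 $[0,d]$ satisfying $-rf(z)-\mu f'(z)+\frac{\sigma^2}{2}f''(z)+\sup_{u\in[0,u_0]}\{(\beta+f'(z))u\}=0$ for $z\in[0,d]$ (with one-sided derivatives at the endpoints). Problem 2: a bounded twice continuously differentiable function $g$ on $[d,\infty)$ satisfying $-rg(z)-\mu g'(z)+\frac{\sigma^2}{2}g''(z)+\sup_{u\in[0,u_0]}\{(\beta+g'(z))u\}=1$ for $z\ge d$. *)

theory Defs
  imports "HOL-Analysis.Analysis"
begin

definition theta1 :: "real \<Rightarrow> real \<Rightarrow> real \<Rightarrow> real \<Rightarrow> real" where
  "theta1 \<mu> \<sigma> r u = (sqrt ((\<mu> - u)\<^sup>2 + 2 * r * \<sigma>\<^sup>2) + (\<mu> - u)) / \<sigma>\<^sup>2"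

definition theta2 :: "real \<Rightarrow> real \<Rightarrow> real \<Rightarrow> real \<Rightarrow> real" where
  "theta2 \<mu> \<sigma> r u = (sqrt ((\<mu> - u)\<^sup>2 + 2 * r * \<sigma>\<^sup>2) - (\<mu> - u)) / \<sigma>\<^sup>2"

definition xi1 :: "real \<Rightarrow> real \<Rightarrow> real \<Rightarrow> real \<Rightarrow> real \<Rightarrow> real \<Rightarrow> real" where
  "xi1 \<mu> \<sigma> u0 r d \<beta> =
     (let a1 = theta1 \<mu> \<sigma> r u0; a2 = theta2 \<mu> \<sigma> r u0 in
      \<beta> * u0 / r - \<beta> * (exp (a1 * d) + a1 / a2 * exp (- a2 * d))
                      / (a1 * (exp (a1 * d) - exp (- a2 * d))))"

definition xi2 :: "real \<Rightarrow> real \<Rightarrow> real \<Rightarrow> real \<Rightarrow> real \<Rightarrow> real" where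
  "xi2 \<mu> \<sigma> u0 r \<beta> = (\<beta> * u0 - 1) / r + \<beta> / theta2 \<mu> \<sigma> r u0"

definition C2_on :: "real set \<Rightarrow> (real \<Rightarrow> real) \<Rightarrow> (real \<Rightarrow> real) \<Rightarrow> (real \<Rightarrow> real) \<Rightarrow> bool" where
  "C2_on S f f' f'' \<longleftrightarrow>
     (\<forall>z\<in>S. (f has_real_derivative f' z) (at z within S) \<and>
            (f' has_real_derivative f'' z) (at z within S)) \<and> continuous_on S f''"

definition HJB_op :: "real \<Rightarrow> real \<Rightarrow> real \<Rightarrow> real \<Rightarrow> real \<Rightarrow> real \<Rightarrow> real \<Rightarrow> real \<Rightarrow> real" where
  "HJB_op \<mu> \<sigma> u0 r \<beta> fz f'z f''z =
     - r * fz - \<mu> * f'z + \<sigma>\<^sup>2 / 2 * f''z + Sup ((\<lambda>u. (\<beta> + f'z) * u) ` {0..u0})"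

definition problem1 :: "real \<Rightarrow> real \<Rightarrow> real \<Rightarrow> real \<Rightarrow> real \<Rightarrow> real \<Rightarrow> (real \<Rightarrow> real) \<Rightarrow> (real \<Rightarrow> real) \<Rightarrow> (real \<Rightarrow> real) \<Rightarrow> bool" where
  "problem1 \<mu> \<sigma> u0 r \<beta> d f f' f'' \<longleftrightarrow>
     C2_on {0..d} f f' f'' \<and> bounded (f ` {0..d}) \<and>
     (\<forall>z\<in>{0..d}. HJB_op \<mu> \<sigma> u0 r \<beta> (f z) (f' z) (f'' z) = 0)"

definition problem2 :: "real \<Rightarrow> real \<Rightarrow> real \<Rightarrow> real \<Rightarrow> real \<Rightarrow> real \<Rightarrow> (real \<Rightarrow> real) \<Rightarrow> (real \<Rightarrow> real) \<Rightarrow> (real \<Rightarrow> real) \<Rightarrow> bool" where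
  "problem2 \<mu> \<sigma> u0 r \<beta> d g g' g'' \<longleftrightarrow>
     C2_on {d..} g g' g'' \<and> bounded (g ` {d..}) \<and>
     (\<forall>z\<in>{d..}. HJB_op \<mu> \<sigma> u0 r \<beta> (g z) (g' z) (g'' z) = 1)"

definition fC :: "real \<Rightarrow> real \<Rightarrow> real \<Rightarrow> real \<Rightarrow> real \<Rightarrow> real \<Rightarrow> real \<Rightarrow> real \<Rightarrow> real" where
  "fC \<mu> \<sigma> u0 r \<beta> d C z =
     (let a1 = theta1 \<mu> \<sigma> r u0; a2 = theta2 \<mu> \<sigma> r u0 in
      \<beta> * u0 / r - (\<beta> * u0 / r - C) / (exp (a1 * d) + a1 / a2 * exp (- a2 * d))
                   * (exp (a1 * z) + a1 / a2 * exp (- a2 * z)))"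

definition gC :: "real \<Rightarrow> real \<Rightarrow> real \<Rightarrow> real \<Rightarrow> real \<Rightarrow> real \<Rightarrow> real \<Rightarrow> real \<Rightarrow> real" where
  "gC \<mu> \<sigma> u0 r \<beta> d C z =
     (\<beta> * u0 - 1) / r + (C - (\<beta> * u0 - 1) / r) * exp (- theta2 \<mu> \<sigma> r u0 * (z - d))"

end

theory Submission
  imports Defs
begin

lemma sup_lin:
  fixes c u0 :: real
  assumes "c \<ge> 0" "u0 > 0"
  shows "Sup ((\<lambda>u. c * u) ` {0..u0}) = c * u0"
proof (rule cSup_eq_maximum)
  show "c * u0 \<in> (\<lambda>u. c * u) ` {0..u0}" using assms by auto
  show "x \<le> c * u0" if "x \<in> (\<lambda>u. c * u) ` {0..u0}" for x
  proof -
    from that obtain u where "u \<in> {0..u0}" "x = c * u" by auto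
    thus ?thesis using assms(1) by (simp add: mult_left_mono)
  qed
qed

lemma roots:
  fixes \<mu> \<sigma> r u0 :: real
  assumes "\<sigma> > 0" "r > 0"
  defines "a1 \<equiv> theta1 \<mu> \<sigma> r u0" and "a2 \<equiv> theta2 \<mu> \<sigma> r u0"
  shows "a1 > 0" "a2 > 0"
    "\<sigma>\<^sup>2/2 * a1\<^sup>2 - (\<mu> - u0) * a1 - r = 0"
    "\<sigma>\<^sup>2/2 * a2\<^sup>2 + (\<mu> - u0) * a2 - r = 0"
proof -
  define m where "m = \<mu> - u0"
  define s where "s = sqrt (m\<^sup>2 + 2 * r * \<sigma>\<^sup>2)"
  define q where "q = \<sigma>\<^sup>2"
  have q: "q > 0" using assms q_def by simp
  have pos: "m\<^sup>2 + 2 * r * \<sigma>\<^sup>2 > m\<^sup>2" using assms by simp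
  have s2: "s\<^sup>2 = m\<^sup>2 + 2 * r * q" unfolding s_def q_def
    using pos by (smt (verit) real_sqrt_pow2 zero_le_power2)
  have "s > \<bar>m\<bar>" unfolding s_def using pos
    by (metis real_sqrt_abs real_sqrt_less_iff)
  hence sm1: "s + m > 0" and sm2: "s - m > 0" by auto
  have e1: "a1 * q = s + m" unfolding a1_def theta1_def s_def m_def q_def using assms by simp
  have e2: "a2 * q = s - m" unfolding a2_def theta2_def s_def m_def q_def using assms by simp
  show "a1 > 0" using e1 sm1 q by (metis zero_less_mult_pos2)
  show "a2 > 0" using e2 sm2 q by (metis zero_less_mult_pos2)
  have "q/2 * a1\<^sup>2 - m * a1 - r = a1 * (a1 * q - 2*m) / 2 - r" by (simp add: power2_eq_square algebra_simps)
  also have "\<dots> = a1 * (s - m) / 2 - r" using e1 by simp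
  also have "\<dots> = (a1 * q) * (s - m) / (2*q) - r" using q by simp
  also have "\<dots> = (s\<^sup>2 - m\<^sup>2) / (2*q) - r" unfolding e1 by (simp add: power2_eq_square algebra_simps)
  also have "\<dots> = 0" unfolding s2 using q by simp
  finally show "\<sigma>\<^sup>2/2 * a1\<^sup>2 - (\<mu> - u0) * a1 - r = 0" unfolding q_def m_def .
  have "q/2 * a2\<^sup>2 + m * a2 - r = a2 * (a2 * q + 2*m) / 2 - r" by (simp add: power2_eq_square algebra_simps)
  also have "\<dots> = a2 * (s + m) / 2 - r" using e2 by simp
  also have "\<dots> = (a2 * q) * (s + m) / (2*q) - r" using q by simp
  also have "\<dots> = (s\<^sup>2 - m\<^sup>2) / (2*q) - r" unfolding e2 by (simp add: power2_eq_square algebra_simps)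
  also have "\<dots> = 0" unfolding s2 using q by simp
  finally show "\<sigma>\<^sup>2/2 * a2\<^sup>2 + (\<mu> - u0) * a2 - r = 0" unfolding q_def m_def .
qed

lemma alg1:
  fixes h a1 a2 B K A X Y r \<mu> u0 \<beta> :: real
  assumes "h*a1^2 - (\<mu> - u0)*a1 - r = 0" "h*a2^2 + (\<mu> - u0)*a2 - r = 0"
    "B*a2 = a1" "r*K = \<beta>*u0"
  shows "-r*(K - A*(X + B*Y)) - \<mu>*(-A*(a1*X - a1*Y)) + h*(-A*(a1*a1*X + a1*a2*Y))
           + (\<beta> + -A*(a1*X - a1*Y))*u0 = 0"
  using assms by algebra

lemma alg2:
  fixes h a2 L c Y r \<mu> u0 \<beta> :: real
  assumes "h*a2^2 + (\<mu> - u0)*a2 - r = 0" "r*L = \<beta>*u0 - 1"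
  shows "-r*(L + c*Y) - \<mu>*(-a2*c*Y) + h*(a2*a2*c*Y) + (\<beta> + -a2*c*Y)*u0 = 1"
  using assms by algebra

theorem proposition4p2:
  fixes \<mu> \<sigma> u0 r \<beta> d C :: real
  assumes "\<sigma> > 0" "u0 > 0" "r > 0" "\<beta> > 0" "d > 0"
  shows "(xi1 \<mu> \<sigma> u0 r d \<beta> \<le> C \<and> C < \<beta> * u0 / r \<longrightarrow>
            (\<exists>f' f''. problem1 \<mu> \<sigma> u0 r \<beta> d (fC \<mu> \<sigma> u0 r \<beta> d C) f' f'' \<and>
                      f' 0 = 0 \<and> fC \<mu> \<sigma> u0 r \<beta> d C d = C))
       \<and> ((\<beta> * u0 - 1) / r < C \<and> C \<le> xi2 \<mu> \<sigma> u0 r \<beta> \<longrightarrow>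
            (\<exists>g' g''. problem2 \<mu> \<sigma> u0 r \<beta> d (gC \<mu> \<sigma> u0 r \<beta> d C) g' g'' \<and>
                      gC \<mu> \<sigma> u0 r \<beta> d C d = C \<and> bounded (gC \<mu> \<sigma> u0 r \<beta> d C ` {d..})))"
proof -
  define a1 where "a1 = theta1 \<mu> \<sigma> r u0"
  define a2 where "a2 = theta2 \<mu> \<sigma> r u0"
  have a1p: "a1 > 0" and a2p: "a2 > 0"
    and r1: "\<sigma>\<^sup>2/2 * a1\<^sup>2 - (\<mu> - u0) * a1 - r = 0"
    and r2: "\<sigma>\<^sup>2/2 * a2\<^sup>2 + (\<mu> - u0) * a2 - r = 0"
    using roots[OF assms(1,3), of \<mu> u0] unfolding a1_def a2_def by auto
  have a2nz: "a2 \<noteq> 0" using a2p by simp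
  have partA: "\<exists>f' f''. problem1 \<mu> \<sigma> u0 r \<beta> d (fC \<mu> \<sigma> u0 r \<beta> d C) f' f'' \<and>
                      f' 0 = 0 \<and> fC \<mu> \<sigma> u0 r \<beta> d C d = C"
    if h1: "xi1 \<mu> \<sigma> u0 r d \<beta> \<le> C" and h2: "C < \<beta> * u0 / r"
  proof -
    define K where "K = \<beta> * u0 / r"
    define D where "D = exp (a1 * d) + a1 / a2 * exp (- a2 * d)"
    define E where "E = exp (a1 * d) - exp (- a2 * d)"
    define A where "A = (K - C) / D"
    define f where "f = (\<lambda>z. K - A * (exp (a1 * z) + a1 / a2 * exp (- a2 * z)))"
    define f' where "f' = (\<lambda>z. - A * (a1 * exp (a1 * z) - a1 * exp (- a2 * z)))"
    define f'' where "f'' = (\<lambda>z. - A * (a1 * a1 * exp (a1 * z) + a1 * a2 * exp (- a2 * z)))"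
    have fC: "fC \<mu> \<sigma> u0 r \<beta> d C = f"
      unfolding fC_def f_def Let_def a1_def[symmetric] a2_def[symmetric] K_def A_def D_def by simp
    have Dp: "D > 0" unfolding D_def using a1p a2p by (simp add: add_pos_pos)
    have Ep: "E > 0" unfolding E_def using mult_pos_pos[OF a1p assms(5)] mult_pos_pos[OF a2p assms(5)] by simp
    have KC: "K - C > 0" using h2 K_def by simp
    have Ap: "A \<ge> 0" unfolding A_def using KC Dp by simp
    have xi: "xi1 \<mu> \<sigma> u0 r d \<beta> = K - \<beta> * D / (a1 * E)"
      unfolding xi1_def Let_def a1_def[symmetric] a2_def[symmetric] K_def D_def E_def by simp
    have "K - C \<le> \<beta> * D / (a1 * E)" using h1 xi by simp
    hence "(K - C) * (a1 * E) \<le> \<beta> * D" using a1p Ep by (simp add: pos_le_divide_eq)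
    hence AE: "A * a1 * E \<le> \<beta>" unfolding A_def using Dp by (simp add: pos_divide_le_eq mult.assoc)
    have d1: "(f has_real_derivative f' z) (at z)" for z
      unfolding f_def f'_def using a2nz
      by (auto intro!: derivative_eq_intros simp: field_simps)
    have d2: "(f' has_real_derivative f'' z) (at z)" for z
      unfolding f'_def f''_def
      by (auto intro!: derivative_eq_intros simp: field_simps)
    have cf: "continuous_on S f" for S unfolding f_def by (intro continuous_intros)
    have cf'': "continuous_on S f''" for S unfolding f''_def by (intro continuous_intros)
    have C2: "C2_on {0..d} f f' f''"
      unfolding C2_on_def using d1 d2 cf'' by (auto intro: has_field_derivative_at_within)
    have bd: "bounded (f ` {0..d})"
      by (rule compact_imp_bounded, rule compact_continuous_image[OF cf compact_Icc])
    have hjb: "HJB_op \<mu> \<sigma> u0 r \<beta> (f z) (f' z) (f'' z) = 0" if z: "z \<in> {0..d}" for z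
    proof -
      have x1: "exp (a1 * z) \<le> exp (a1 * d)" using z a1p by (simp add: mult_left_mono)
      have x2: "exp (- a2 * d) \<le> exp (- a2 * z)" using z a2p by (simp add: mult_left_mono)
      have "exp (a1 * z) - exp (- a2 * z) \<le> E" unfolding E_def using x1 x2 by linarith
      hence "A * a1 * (exp (a1 * z) - exp (- a2 * z)) \<le> A * a1 * E"
        using Ap a1p by (simp add: mult_left_mono)
      hence nn: "\<beta> + f' z \<ge> 0" using AE unfolding f'_def by (simp add: algebra_simps)
      have "HJB_op \<mu> \<sigma> u0 r \<beta> (f z) (f' z) (f'' z) =
          - r * f z - \<mu> * f' z + \<sigma>\<^sup>2 / 2 * f'' z + (\<beta> + f' z) * u0"
        unfolding HJB_op_def using sup_lin[OF nn assms(2)] by simp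
      also have "\<dots> = 0" unfolding f_def f'_def f''_def
        by (rule alg1[OF r1 r2]) (use a2nz assms(3) K_def in auto)
      finally show ?thesis .
    qed
    have "f d = C" unfolding f_def A_def D_def using Dp[unfolded D_def] by simp
    moreover have "f' 0 = 0" unfolding f'_def by simp
    ultimately show ?thesis unfolding fC problem1_def using C2 bd hjb by blast
  qed
  have partB: "\<exists>g' g''. problem2 \<mu> \<sigma> u0 r \<beta> d (gC \<mu> \<sigma> u0 r \<beta> d C) g' g'' \<and>
                      gC \<mu> \<sigma> u0 r \<beta> d C d = C \<and> bounded (gC \<mu> \<sigma> u0 r \<beta> d C ` {d..})"
    if h1: "(\<beta> * u0 - 1) / r < C" and h2: "C \<le> xi2 \<mu> \<sigma> u0 r \<beta>"
  proof -
    define L where "L = (\<beta> * u0 - 1) / r"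
    define c where "c = C - L"
    define g where "g = (\<lambda>z. L + c * exp (- a2 * (z - d)))"
    define g' where "g' = (\<lambda>z. - a2 * c * exp (- a2 * (z - d)))"
    define g'' where "g'' = (\<lambda>z. a2 * a2 * c * exp (- a2 * (z - d)))"
    have gC: "gC \<mu> \<sigma> u0 r \<beta> d C = g"
      unfolding gC_def g_def a2_def[symmetric] L_def c_def by simp
    have cp: "c > 0" using h1 unfolding c_def L_def by simp
    have "C \<le> L + \<beta> / a2" using h2 unfolding xi2_def L_def a2_def by simp
    hence "c \<le> \<beta> / a2" unfolding c_def by simp
    hence ac: "a2 * c \<le> \<beta>" using a2p by (simp add: pos_le_divide_eq mult.commute)
    have d1: "(g has_real_derivative g' z) (at z)" for z
      unfolding g_def g'_def
      by (auto intro!: derivative_eq_intros simp: field_simps)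
    have d2: "(g' has_real_derivative g'' z) (at z)" for z
      unfolding g'_def g''_def
      by (auto intro!: derivative_eq_intros simp: field_simps)
    have cg'': "continuous_on S g''" for S unfolding g''_def by (intro continuous_intros)
    have C2: "C2_on {d..} g g' g''"
      unfolding C2_on_def using d1 d2 cg'' by (auto intro: has_field_derivative_at_within)
    have Y1: "exp (- a2 * (z - d)) \<le> 1" if "z \<in> {d..}" for z
      using that a2p by (simp add: mult_nonneg_nonneg)
    have bd: "bounded (g ` {d..})"
    proof -
      have "\<bar>g z\<bar> \<le> \<bar>L\<bar> + c" if "z \<in> {d..}" for z
      proof -
        have "c * exp (- a2 * (z - d)) \<le> c" using Y1[OF that] cp
          by (simp add: mult_left_le)
        moreover have "c * exp (- a2 * (z - d)) \<ge> 0" using cp by simp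
        ultimately show ?thesis unfolding g_def by linarith
      qed
      thus ?thesis unfolding bounded_iff by (auto intro!: exI[of _ "\<bar>L\<bar> + c"])
    qed
    have hjb: "HJB_op \<mu> \<sigma> u0 r \<beta> (g z) (g' z) (g'' z) = 1" if z: "z \<in> {d..}" for z
    proof -
      have "a2 * c * exp (- a2 * (z - d)) \<le> a2 * c"
        using Y1[OF z] cp a2p by (simp add: mult_left_le)
      hence nn: "\<beta> + g' z \<ge> 0" using ac unfolding g'_def by simp
      have "HJB_op \<mu> \<sigma> u0 r \<beta> (g z) (g' z) (g'' z) =
          - r * g z - \<mu> * g' z + \<sigma>\<^sup>2 / 2 * g'' z + (\<beta> + g' z) * u0"
        unfolding HJB_op_def using sup_lin[OF nn assms(2)] by simp
      also have "\<dots> = 1" unfolding g_def g'_def g''_def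
        by (rule alg2[OF r2]) (use assms(3) L_def in auto)
      finally show ?thesis .
    qed
    have "g d = C" unfolding g_def c_def by simp
    thus ?thesis unfolding gC problem2_def using C2 bd hjb by blast
  qed
  show ?thesis using partA partB by blast
qed

end
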